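(* Let $\{S_i\}_{i\in\mathcal I}$ be an IFS of contracting similarities on $\mathbb R^d$ satisfying the SSC, with attractor $K$, and let $\Delta\subset\mathcal P$ be arbitrary. Then the family $\{\mu_{\bm p}:\bm p\in\Delta\}$ has uniform densities.
   Context: $\mathcal I$ finite; $S_i$ contracting similarities with ratios $r_i\in(0,1)$; $K$ the unique nonempty compact set with $K=\bigcup_iS_i(K)$; SSC: $S_i(K)\cap S_j(K)=\varnothing$ for $i\ne j$. $\mathcal P$ is the set of probability vectors on $\mathcal I$; $\mu_{\bm p}$ is the unique Borel probability measure with $\mu_{\bm p}=\sum_ip_i\,\mu_{\bm p}\circ S_i^{-1}$. Definition: for a compact set $K\subset\mathbb R^d$, a set $\Delta$ of Borel probability measures each supported in $K$ has uniform densities if for every $\epsilon>0$ there exist a set $\mathcal E$ of Borel measures on $\mathbb R^d$ with $\sum_{\nu\in\mathcal E}\nu(\mathbb R^d)<\infty$ and a constant $\eta>0$ such that for all $\mu\in\Delta$, $r\in(0,\eta)$ and $x\in K$ there is $\nu\in\mathcal E$ with $\frac{\log\nu(B(x,r))}{\log r}\le\frac{\log\mu(B(x,r))}{\log r}+\epsilon$ (equivalently $r^\epsilon\mu(B(x,r))\le\nu(B(x,r))$). *)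

theory Defs
  imports "HOL-Probability.Probability"
begin

definition prob_vectors :: "'i set \<Rightarrow> ('i \<Rightarrow> real) set" where
  "prob_vectors I = {p. (\<forall>i\<in>I. 0 \<le> p i) \<and> (\<Sum>i\<in>I. p i) = 1}"

definition contracting_similarity :: "('a::metric_space \<Rightarrow> 'a) \<Rightarrow> real \<Rightarrow> bool" where
  "contracting_similarity f r \<longleftrightarrow> 0 < r \<and> r < 1 \<and> (\<forall>x y. dist (f x) (f y) = r * dist x y)"

definition is_self_similar_measure ::
  "'i set \<Rightarrow> ('i \<Rightarrow> 'a::euclidean_space \<Rightarrow> 'a) \<Rightarrow> ('i \<Rightarrow> real) \<Rightarrow> 'a measure \<Rightarrow> bool" where
  "is_self_similar_measure I S p mu \<longleftrightarrow>
     prob_space mu \<and> sets mu = sets borel \<and>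
     (\<forall>A\<in>sets borel. emeasure mu A = (\<Sum>i\<in>I. ennreal (p i) * emeasure mu (S i -` A)))"

text \<open>Uniform densities of a set of Borel probability measures supported in K
  (using the equivalent form r^eps mu(B(x,r)) <= nu(B(x,r))).\<close>
definition uniform_densities :: "'a::euclidean_space set \<Rightarrow> 'a measure set \<Rightarrow> bool" where
  "uniform_densities K D \<longleftrightarrow>
     (\<forall>mu\<in>D. prob_space mu \<and> sets mu = sets borel \<and> emeasure mu (UNIV - K) = 0) \<and>
     (\<forall>eps>0. \<exists>E :: 'a measure set. \<exists>eta>0.
        (\<forall>nu\<in>E. sets nu = sets borel) \<and>
        (SUP F\<in>{F. finite F \<and> F \<subseteq> E}. \<Sum>nu\<in>F. emeasure nu (space nu)) < \<infinity> \<and>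
        (\<forall>mu\<in>D. \<forall>r. 0 < r \<and> r < eta \<longrightarrow> (\<forall>x\<in>K. \<exists>nu\<in>E.
            ennreal (r powr eps) * emeasure mu (ball x r) \<le> emeasure nu (ball x r))))"

end

theory Submission
  imports Defs
begin



definition Sw :: "('i \<Rightarrow> 'a \<Rightarrow> 'a) \<Rightarrow> 'i list \<Rightarrow> 'a \<Rightarrow> 'a" where
  "Sw S w = foldr (\<lambda>i f. S i \<circ> f) w id"

lemma Sw_Nil[simp]: "Sw S [] = id" by (simp add: Sw_def)
lemma Sw_Cons[simp]: "Sw S (i#w) = S i \<circ> Sw S w" by (simp add: Sw_def)
lemma Sw_append: "Sw S (w@v) = Sw S w \<circ> Sw S v" by (induction w) auto

definition wprod :: "('i \<Rightarrow> real) \<Rightarrow> 'i list \<Rightarrow> real" where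
  "wprod f w = prod_list (map f w)"
lemma wprod_Nil[simp]: "wprod f [] = 1" by (simp add: wprod_def)
lemma wprod_Cons[simp]: "wprod f (i#w) = f i * wprod f w" by (simp add: wprod_def)
lemma wprod_append: "wprod f (w@v) = wprod f w * wprod f v" by (simp add: wprod_def)

lemma wprod_nonneg: "(\<And>i. i \<in> set w \<Longrightarrow> 0 \<le> f i) \<Longrightarrow> 0 \<le> wprod f w"
  by (induction w) auto

lemma wprod_mono: "(\<And>i. i \<in> set w \<Longrightarrow> 0 \<le> f i \<and> f i \<le> g i) \<Longrightarrow> wprod f w \<le> wprod g w"
proof (induction w)
  case (Cons a w)
  have "0 \<le> wprod f w" by (rule wprod_nonneg) (use Cons.prems in auto)
  moreover have "wprod f w \<le> wprod g w" using Cons by auto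
  ultimately show ?case using Cons.prems[of a] by (auto intro!: mult_mono)
qed simp

lemma wprod_le_pow: "(\<And>i. i \<in> set w \<Longrightarrow> 0 \<le> f i \<and> f i \<le> c) \<Longrightarrow> wprod f w \<le> c ^ length w"
proof (induction w)
  case (Cons a w)
  have "0 \<le> wprod f w" by (rule wprod_nonneg) (use Cons.prems in auto)
  moreover have "wprod f w \<le> c ^ length w" using Cons by auto
  ultimately show ?case using Cons.prems[of a] by (auto intro!: mult_mono)
qed simp

lemma wprod_ge_pos: "(\<And>i. i \<in> set w \<Longrightarrow> 0 < f i) \<Longrightarrow> 0 < wprod f w"
  by (induction w) auto

lemma sum_words:
  fixes q :: "'i \<Rightarrow> real"
  assumes "finite A"
  shows "(\<Sum>w\<in>{xs. set xs \<subseteq> A \<and> length xs = n}. wprod q w) = (\<Sum>i\<in>A. q i) ^ n"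
proof (induction n)
  case 0
  have "{xs. set xs \<subseteq> A \<and> length xs = 0} = {[]}" by auto
  then show ?case by simp
next
  case (Suc n)
  have inj: "inj_on (\<lambda>(xs, n). n#xs) ({xs. set xs \<subseteq> A \<and> length xs = n} \<times> A)"
    by (auto simp: inj_on_def)
  have fin: "finite {xs. set xs \<subseteq> A \<and> length xs = n}"
    using assms by (rule finite_lists_length_eq)
  have "(\<Sum>w\<in>{xs. set xs \<subseteq> A \<and> length xs = Suc n}. wprod q w)
      = (\<Sum>(xs,i)\<in>{xs. set xs \<subseteq> A \<and> length xs = n} \<times> A. q i * wprod q xs)"
    unfolding lists_length_Suc_eq by (subst sum.reindex[OF inj]) (simp add: case_prod_unfold)
  also have "\<dots> = (\<Sum>xs\<in>{xs. set xs \<subseteq> A \<and> length xs = n}. \<Sum>i\<in>A. q i * wprod q xs)"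
    by (rule sum.cartesian_product[symmetric])
  also have "\<dots> = (\<Sum>xs\<in>{xs. set xs \<subseteq> A \<and> length xs = n}. wprod q xs) * (\<Sum>i\<in>A. q i)"
    by (simp add: sum_distrib_left sum_distrib_right mult.commute)
  finally show ?case using Suc by simp
qed




locale ifs =
  fixes I :: "'i set" and S :: "'i \<Rightarrow> 'a::euclidean_space \<Rightarrow> 'a" and r :: "'i \<Rightarrow> real" and K :: "'a set"
  assumes finI: "finite I" and neI: "I \<noteq> {}"
    and sim: "\<And>i. i \<in> I \<Longrightarrow> contracting_similarity (S i) (r i)"
    and cK: "compact K" and neK: "K \<noteq> {}" and fixK: "K = (\<Union>i\<in>I. S i ` K)"
    and ssc: "\<And>i j. i \<in> I \<Longrightarrow> j \<in> I \<Longrightarrow> i \<noteq> j \<Longrightarrow> S i ` K \<inter> S j ` K = {}"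
begin

lemma r_pos: "i \<in> I \<Longrightarrow> 0 < r i" and r_less1: "i\<in>I \<Longrightarrow> r i < 1"
  and S_dist: "i\<in>I \<Longrightarrow> dist (S i x) (S i y) = r i * dist x y"
  using sim unfolding contracting_similarity_def by auto

lemma S_cont: assumes "i \<in> I" shows "continuous_on A (S i)"
  unfolding continuous_on_iff
proof (intro ballI allI impI)
  fix x e assume "x \<in> A" "(0::real) < e"
  show "\<exists>d>0. \<forall>x'\<in>A. dist x' x < d \<longrightarrow> dist (S i x') (S i x) < e"
  proof (intro exI[of _ e] conjI ballI impI)
    fix x' assume "dist x' x < e"
    have "dist (S i x') (S i x) = r i * dist x' x" using S_dist assms by blast
    also have "\<dots> \<le> dist x' x" using r_less1[OF assms] r_pos[OF assms]
      by (intro mult_left_le_one_le) auto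
    finally show "dist (S i x') (S i x) < e" using \<open>dist x' x < e\<close> by simp
  qed (use \<open>0 < e\<close> in auto)
qed

lemma S_inj: "i \<in> I \<Longrightarrow> inj (S i)"
proof (rule injI)
  fix x y assume i: "i \<in> I" and "S i x = S i y"
  then have "r i * dist x y = 0" using S_dist[OF i, of x y] by simp
  then show "x = y" using r_pos[OF i] by simp
qed

lemma Sw_dist: "set w \<subseteq> I \<Longrightarrow> dist (Sw S w x) (Sw S w y) = wprod r w * dist x y"
  by (induction w) (auto simp: S_dist)

lemma Sw_cont: "set w \<subseteq> I \<Longrightarrow> continuous_on A (Sw S w)"
proof (induction w arbitrary: A)
  case (Cons a w)
  have a: "a \<in> I" and "continuous_on A (Sw S w)" using Cons by auto
  then have "continuous_on A (S a \<circ> Sw S w)"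
    by (intro continuous_on_compose S_cont)
  then show ?case by simp
qed simp

definition KW where "KW w = Sw S w ` K"

lemma SK_sub: "i \<in> I \<Longrightarrow> S i ` K \<subseteq> K" using fixK by blast

lemma KW_sub: "set w \<subseteq> I \<Longrightarrow> KW w \<subseteq> K"
proof (induction w)
  case Nil then show ?case by (simp add: KW_def)
next
  case (Cons a w)
  then have "KW (a#w) = S a ` KW w" by (simp add: KW_def image_comp)
  also have "\<dots> \<subseteq> S a ` K" using Cons by auto
  also have "\<dots> \<subseteq> K" using SK_sub Cons by auto
  finally show ?case .
qed

lemma KW_compact: "set w \<subseteq> I \<Longrightarrow> compact (KW w)"
  unfolding KW_def by (rule compact_continuous_image[OF Sw_cont cK])

lemma KW_split: assumes "set w \<subseteq> I" "x \<in> KW w" shows "\<exists>i\<in>I. x \<in> KW (w@[i])"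
proof -
  obtain a where a: "a \<in> K" "x = Sw S w a" using assms by (auto simp: KW_def)
  then obtain i b where "i \<in> I" "b \<in> K" "a = S i b" using fixK by blast
  then show ?thesis using a by (auto simp: KW_def Sw_append)
qed

lemma KW_extend: "set w \<subseteq> I \<Longrightarrow> x \<in> KW w \<Longrightarrow> \<exists>v. set v \<subseteq> I \<and> length v = L \<and> x \<in> KW (w@v)"
proof (induction L)
  case 0 then show ?case by auto
next
  case (Suc L)
  then obtain v where v: "set v \<subseteq> I" "length v = L" "x \<in> KW (w@v)" by blast
  then obtain i where "i \<in> I" "x \<in> KW (w@v@[i])" using KW_split[of "w@v" x] Suc.prems by auto
  then show ?case using v by (intro exI[of _ "v@[i]"]) auto
qed

lemma r_wprod_le1: "set w \<subseteq> I \<Longrightarrow> wprod r w \<le> 1"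
proof -
  assume w: "set w \<subseteq> I"
  have "wprod r w \<le> 1 ^ length w"
    by (rule wprod_le_pow) (use w r_pos r_less1 in \<open>force intro: less_imp_le\<close>)
  then show ?thesis by simp
qed

lemma r_wprod_pos: "set w \<subseteq> I \<Longrightarrow> 0 < wprod r w"
  using wprod_ge_pos[of w r] r_pos by blast

lemma sep_exists: "\<exists>\<delta>>0. \<forall>i\<in>I. \<forall>j\<in>I. i \<noteq> j \<longrightarrow> (\<forall>a\<in>K. \<forall>b\<in>K. \<delta> \<le> dist (S i a) (S j b))"
proof -
  let ?P = "{(i,j). i \<in> I \<and> j \<in> I \<and> i \<noteq> j}"
  have "\<forall>pr\<in>?P. \<exists>d>0. \<forall>x\<in>S (fst pr) ` K. \<forall>y\<in>S (snd pr) ` K. d \<le> dist x y"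
  proof
    fix pr assume "pr \<in> ?P"
    then obtain i j where ij: "pr = (i,j)" "i \<in> I" "j \<in> I" "i \<noteq> j" by auto
    have "compact (S i ` K)" "compact (S j ` K)"
      using compact_continuous_image[OF S_cont cK] ij by auto
    then show "\<exists>d>0. \<forall>x\<in>S (fst pr) ` K. \<forall>y\<in>S (snd pr) ` K. d \<le> dist x y"
      using separate_compact_closed[of "S i ` K" "S j ` K"] ssc[OF ij(2-4)] ij(1)
      by (auto dest: compact_imp_closed)
  qed
  then obtain d where d: "\<forall>pr\<in>?P. d pr > 0 \<and> (\<forall>x\<in>S (fst pr) ` K. \<forall>y\<in>S (snd pr) ` K. d pr \<le> dist x y)"
    by (rule bchoice_iff[THEN iffD1, elim_format]) blast
  have finP: "finite ?P" by (rule finite_subset[of _ "I \<times> I"]) (use finI in auto)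
  define \<delta> where "\<delta> = Min (insert 1 (d ` ?P))"
  have "\<delta> > 0" unfolding \<delta>_def using finP d by auto
  moreover have "\<forall>i\<in>I. \<forall>j\<in>I. i \<noteq> j \<longrightarrow> (\<forall>a\<in>K. \<forall>b\<in>K. \<delta> \<le> dist (S i a) (S j b))"
  proof (intro ballI impI)
    fix i j a b assume h: "i \<in> I" "j \<in> I" "i \<noteq> j" "a \<in> K" "b \<in> K"
    then have "\<delta> \<le> d (i,j)" unfolding \<delta>_def using finP by (intro Min_le) auto
    also have "d (i,j) \<le> dist (S i a) (S j b)" using d h by fastforce
    finally show "\<delta> \<le> dist (S i a) (S j b)" .
  qed
  ultimately show ?thesis by blast
qed

lemma lemmaA:
  assumes \<delta>: "\<delta> > 0" "\<forall>i\<in>I. \<forall>j\<in>I. i \<noteq> j \<longrightarrow> (\<forall>a\<in>K. \<forall>b\<in>K. \<delta> \<le> dist (S i a) (S j b))"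
  shows "set w \<subseteq> I \<Longrightarrow> x \<in> KW w \<Longrightarrow> y \<in> K \<Longrightarrow> dist x y < \<delta> * wprod r w \<Longrightarrow> y \<in> KW w"
proof (induction w arbitrary: x y)
  case Nil then show ?case by (simp add: KW_def)
next
  case (Cons i w)
  obtain x' where x': "x' \<in> KW w" "x = S i x'" using Cons.prems by (auto simp: KW_def)
  obtain j y' where y': "j \<in> I" "y' \<in> K" "y = S j y'" using Cons.prems(3) fixK by blast
  have i: "i \<in> I" and wI: "set w \<subseteq> I" using Cons.prems by auto
  have x'K: "x' \<in> K" using x' KW_sub wI by blast
  show ?case
  proof (cases "j = i")
    case False
    have "\<delta> \<le> dist x y" using \<delta>(2) i y' x' x'K False by auto
    moreover have "\<delta> * wprod r (i#w) \<le> \<delta>" using r_wprod_le1[of "i#w"] Cons.prems \<delta>(1)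
      by (simp add: mult_le_cancel_left1)
    ultimately show ?thesis using Cons.prems(4) by linarith
  next
    case True
    have "r i * dist x' y' = dist x y" using x' y' True S_dist i by simp
    also have "\<dots> < \<delta> * (r i * wprod r w)" using Cons.prems(4) by simp
    finally have "dist x' y' < \<delta> * wprod r w" using r_pos[OF i] by (simp add: mult.left_commute)
    then have "y' \<in> KW w" using Cons.IH[OF wI x'(1) y'(2)] by simp
    then show ?thesis using y' True by (auto simp: KW_def)
  qed
qed

end



context ifs
begin

definition "\<rho> = Max (r ` I)"

lemma rho: "0 < \<rho>" "\<rho> < 1" "\<And>i. i \<in> I \<Longrightarrow> r i \<le> \<rho>"
proof -
  have "\<rho> \<in> r ` I" unfolding \<rho>_def using finI neI by (intro Max_in) auto
  then obtain i where i: "i \<in> I" "\<rho> = r i" by auto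
  then show "0 < \<rho>" "\<rho> < 1" using r_pos r_less1 by auto
  show "\<And>i. i \<in> I \<Longrightarrow> r i \<le> \<rho>" unfolding \<rho>_def using finI by auto
qed

lemma closedK: "closed K" using cK by (rule compact_imp_closed)

lemma infdist_S: assumes i: "i \<in> I" shows "infdist (S i y) K \<le> \<rho> * infdist y K"
proof -
  obtain k where k: "k \<in> K" "infdist y K = dist y k"
    using infdist_attains_inf[OF closedK neK] by blast
  have "S i k \<in> K" using SK_sub[OF i] k by auto
  then have "infdist (S i y) K \<le> dist (S i y) (S i k)" by (rule infdist_le)
  also have "\<dots> = r i * dist y k" using S_dist[OF i] .
  also have "\<dots> \<le> \<rho> * dist y k" using rho(3)[OF i] by (intro mult_right_mono) auto
  finally show ?thesis using k by simp
qed

end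

locale ifs_measure = ifs I S r K
  for I :: "'i set" and S :: "'i \<Rightarrow> 'a::euclidean_space \<Rightarrow> 'a" and r K +
  fixes p :: "'i \<Rightarrow> real" and mu :: "'a measure"
  assumes pv: "p \<in> prob_vectors I" and ssm: "is_self_similar_measure I S p mu"
begin

lemma p_nonneg: "i \<in> I \<Longrightarrow> 0 \<le> p i" and p_sum: "(\<Sum>i\<in>I. p i) = 1"
  using pv by (auto simp: prob_vectors_def)

lemma ps: "prob_space mu" and sets_mu: "sets mu = sets borel"
  and selfsim: "\<And>A. A \<in> sets borel \<Longrightarrow> emeasure mu A = (\<Sum>i\<in>I. ennreal (p i) * emeasure mu (S i -` A))"
  using ssm by (auto simp: is_self_similar_measure_def)

lemma fin_mu: "emeasure mu A \<noteq> \<infinity>"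
  using prob_space.emeasure_le_1[OF ps, of A] by (auto simp: top_unique)

definition "U t = {y. t < infdist y K}"

lemma U_borel: "U t \<in> sets mu"
proof -
  have "open (U t)" unfolding U_def by (rule open_Collect_less) (intro continuous_on_infdist continuous_on_id continuous_on_const)+
  then show ?thesis by (simp add: sets_mu)
qed

lemma U_step: "emeasure mu (U t) \<le> emeasure mu (U (t / \<rho>))"
proof -
  have "emeasure mu (U t) = (\<Sum>i\<in>I. ennreal (p i) * emeasure mu (S i -` U t))"
    using U_borel sets_mu by (intro selfsim) auto
  also have "\<dots> \<le> (\<Sum>i\<in>I. ennreal (p i) * emeasure mu (U (t / \<rho>)))"
  proof (intro sum_mono mult_left_mono emeasure_mono)
    fix i assume i: "i \<in> I"
    show "S i -` U t \<subseteq> U (t / \<rho>)"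
    proof
      fix y assume "y \<in> S i -` U t"
      then have "t < infdist (S i y) K" by (simp add: U_def)
      also have "\<dots> \<le> \<rho> * infdist y K" by (rule infdist_S[OF i])
      finally have "t / \<rho> < infdist y K" using rho(1) by (simp add: divide_less_eq mult.commute)
      then show "y \<in> U (t / \<rho>)" by (simp add: U_def)
    qed
  qed (auto simp: U_borel)
  also have "\<dots> = (\<Sum>i\<in>I. ennreal (p i)) * emeasure mu (U (t / \<rho>))"
    by (simp add: sum_distrib_right)
  also have "\<dots> = emeasure mu (U (t / \<rho>))" using p_nonneg p_sum by simp
  finally show ?thesis .
qed

lemma U_iter: "emeasure mu (U t) \<le> emeasure mu (U (t / \<rho> ^ n))"
proof (induction n)
  case (Suc n)
  also have "emeasure mu (U (t / \<rho> ^ n)) \<le> emeasure mu (U (t / \<rho> ^ n / \<rho>))" by (rule U_step)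
  finally show ?case by (simp add: mult.commute)
qed simp

lemma U_null: assumes t: "t > 0" shows "emeasure mu (U t) = 0"
proof -
  define A where "A n = U (t / \<rho> ^ n)" for n
  have dec: "decseq A" unfolding decseq_def A_def U_def
  proof (clarsimp)
    fix m n y assume "m \<le> n" "t / \<rho> ^ n < infdist y K"
    moreover have "t / \<rho> ^ m \<le> t / \<rho> ^ n"
      using rho(1,2) t \<open>m \<le> n\<close> by (intro divide_left_mono power_decreasing) auto
    ultimately show "t / \<rho> ^ m < infdist y K" by linarith
  qed
  have empty: "(\<Inter>n. A n) = {}"
  proof (rule ccontr)
    assume "(\<Inter>n. A n) \<noteq> {}"
    then obtain y where y: "\<And>n. y \<in> A n" by auto
    have "1 < 1 / \<rho>" using rho by simp
    then obtain n where n: "infdist y K / t < (1 / \<rho>) ^ n" using real_arch_pow by blast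
    have a: "t / \<rho> ^ n < infdist y K" using y[of n] by (simp add: A_def U_def)
    have "infdist y K < (1 / \<rho>) ^ n * t" using n t by (simp add: divide_less_eq)
    moreover have "(1 / \<rho>) ^ n * t = t / \<rho> ^ n" by (simp add: power_one_over)
    ultimately have "infdist y K < t / \<rho> ^ n" by simp
    then show False using a by simp
  qed
  have "(\<lambda>n. emeasure mu (A n)) \<longlonglongrightarrow> emeasure mu (\<Inter>n. A n)"
    by (rule Lim_emeasure_decseq[OF _ dec fin_mu]) (auto simp: A_def U_borel)
  then have "emeasure mu (U t) \<le> emeasure mu (\<Inter>n. A n)"
    by (rule LIMSEQ_le_const) (auto simp: A_def U_iter)
  then show ?thesis using empty by simp
qed

lemma support: "emeasure mu (UNIV - K) = 0"
proof -
  have eq: "UNIV - K = (\<Union>n. U (inverse (real (Suc n))))"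
  proof (intro set_eqI iffI)
    fix y assume "y \<in> UNIV - K"
    then have "infdist y K > 0" using infdist_pos_not_in_closed[OF closedK neK] by auto
    then obtain n where "inverse (real (Suc n)) < infdist y K" using reals_Archimedean by blast
    then show "y \<in> (\<Union>n. U (inverse (real (Suc n))))" unfolding U_def by blast
  next
    fix y assume "y \<in> (\<Union>n. U (inverse (real (Suc n))))"
    then obtain n where n: "inverse (real (Suc n)) < infdist y K" unfolding U_def by blast
    have "0 < inverse (real (Suc n))" by simp
    then have "infdist y K \<noteq> 0" using n by linarith
    then show "y \<in> UNIV - K" using in_closed_iff_infdist_zero[OF closedK neK] by blast
  qed
  have "emeasure mu (UNIV - K) \<le> (\<Sum>n. emeasure mu (U (inverse (real (Suc n)))))"
    unfolding eq by (rule emeasure_subadditive_countably) (auto simp: U_borel)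
  also have "\<dots> = (\<Sum>n. 0)"
    by (intro suminf_cong U_null) simp
  also have "\<dots> = 0" by simp
  finally show ?thesis by simp
qed

end



context ifs_measure
begin

lemma KW_borel: "set w \<subseteq> I \<Longrightarrow> KW w \<in> sets borel"
  using KW_compact by (auto intro: borel_closed compact_imp_closed)

lemma compl_borel: "UNIV - K \<in> sets borel"
  using closedK by (intro borel_open) (simp add: open_Diff)

lemma mu_KW: "set w \<subseteq> I \<Longrightarrow> emeasure mu (KW w) \<le> ennreal (wprod p w)"
proof (induction w)
  case Nil
  have "emeasure mu (KW []) \<le> 1" using prob_space.emeasure_le_1[OF ps] by simp
  then show ?case by simp
next
  case (Cons i w)
  have i: "i \<in> I" and wI: "set w \<subseteq> I" using Cons.prems by auto
  have eq: "KW (i#w) = S i ` KW w" by (simp add: KW_def image_comp)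
  have bor: "S i ` KW w \<in> sets borel"
    using KW_borel[OF Cons.prems] eq by simp
  let ?f = "\<lambda>j. ennreal (p j) * emeasure mu (S j -` (S i ` KW w))"
  have "emeasure mu (KW (i#w)) = (\<Sum>j\<in>I. ?f j)"
    unfolding eq by (rule selfsim[OF bor])
  also have "\<dots> = ?f i + (\<Sum>j\<in>I - {i}. ?f j)"
    using finI i by (simp add: sum.remove)
  also have "(\<Sum>j\<in>I - {i}. ?f j) = 0"
  proof (intro sum.neutral ballI)
    fix j assume j: "j \<in> I - {i}"
    have "S j -` (S i ` KW w) \<subseteq> UNIV - K"
    proof
      fix y assume y: "y \<in> S j -` (S i ` KW w)"
      have "y \<notin> K"
      proof
        assume yK: "y \<in> K"
        have "S j y \<in> S i ` K" using y KW_sub[OF wI] by auto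
        moreover have "S j y \<in> S j ` K" using yK by auto
        ultimately show False using ssc[of i j] i j by auto
      qed
      then show "y \<in> UNIV - K" by simp
    qed
    then have "emeasure mu (S j -` (S i ` KW w)) \<le> emeasure mu (UNIV - K)"
      by (rule emeasure_mono) (simp add: sets_mu compl_borel)
    then have "emeasure mu (S j -` (S i ` KW w)) = 0" using support by simp
    then show "?f j = 0" by simp
  qed
  also have "S i -` (S i ` KW w) = KW w" using S_inj[OF i] by (simp add: inj_vimage_image_eq)
  also have "ennreal (p i) * emeasure mu (KW w) + 0 \<le> ennreal (p i) * ennreal (wprod p w)"
    using Cons.IH[OF wI] by (simp add: mult_left_mono)
  also have "\<dots> = ennreal (wprod p (i#w))"
    using p_nonneg[OF i] wprod_nonneg[of w p] p_nonneg wI by (simp add: ennreal_mult subset_iff)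
  finally show ?case .
qed

lemma ball_bound:
  assumes \<delta>: "\<delta> > 0" "\<forall>i\<in>I. \<forall>j\<in>I. i \<noteq> j \<longrightarrow> (\<forall>a\<in>K. \<forall>b\<in>K. \<delta> \<le> dist (S i a) (S j b))"
    and w: "set w \<subseteq> I" "x \<in> KW w" and r0: "r0 \<le> \<delta> * wprod r w"
  shows "emeasure mu (ball x r0) \<le> ennreal (wprod p w)"
proof -
  have "ball x r0 \<subseteq> KW w \<union> (UNIV - K)"
  proof
    fix y assume y: "y \<in> ball x r0"
    show "y \<in> KW w \<union> (UNIV - K)"
    proof (cases "y \<in> K")
      case True
      have "dist x y < \<delta> * wprod r w" using y r0 by (simp add: dist_commute)
      then show ?thesis using lemmaA[OF \<delta> w True] by simp
    qed simp
  qed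
  then have "emeasure mu (ball x r0) \<le> emeasure mu (KW w \<union> (UNIV - K))"
    by (rule emeasure_mono) (use KW_borel[OF w(1)] compl_borel in \<open>simp add: sets_mu\<close>)
  also have "\<dots> \<le> emeasure mu (KW w) + emeasure mu (UNIV - K)"
    by (rule emeasure_subadditive) (use KW_borel[OF w(1)] compl_borel in \<open>simp_all add: sets_mu\<close>)
  also have "\<dots> \<le> ennreal (wprod p w)" using mu_KW[OF w(1)] support by simp
  finally show ?thesis .
qed

end



lemma geo_words:
  fixes q :: "'i \<Rightarrow> real"
  assumes fin: "finite I" and k: "0 \<le> \<kappa>" and q: "\<And>i. i \<in> I \<Longrightarrow> 0 \<le> q i"
    and qs: "sum q I \<le> s" and ks: "\<kappa> * s < 1"
  shows "(\<Sum>w\<in>{w. set w \<subseteq> I \<and> length w \<le> M}. \<kappa> ^ length w * wprod q w) \<le> 1 / (1 - \<kappa> * s)"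
proof -
  define W where "W n = {w. set w \<subseteq> I \<and> length w = n}" for n
  have eq: "{w. set w \<subseteq> I \<and> length w \<le> M} = (\<Union>n\<in>{..M}. W n)" by (auto simp: W_def)
  have finW: "\<And>n. finite (W n)" unfolding W_def using fin by (rule finite_lists_length_eq)
  have s0: "0 \<le> sum q I" using q by (simp add: sum_nonneg)
  have "(\<Sum>w\<in>{w. set w \<subseteq> I \<and> length w \<le> M}. \<kappa> ^ length w * wprod q w)
      = (\<Sum>n\<in>{..M}. \<Sum>w\<in>W n. \<kappa> ^ length w * wprod q w)"
    unfolding eq by (rule sum.UNION_disjoint) (use finW in \<open>auto simp: W_def\<close>)
  also have "\<dots> = (\<Sum>n\<in>{..M}. \<kappa> ^ n * (sum q I) ^ n)"
  proof (rule sum.cong[OF refl])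
    fix n
    have "(\<Sum>w\<in>W n. \<kappa> ^ length w * wprod q w) = (\<Sum>w\<in>W n. \<kappa> ^ n * wprod q w)"
      by (rule sum.cong) (auto simp: W_def)
    also have "\<dots> = \<kappa> ^ n * (sum q I) ^ n"
      using sum_words[OF fin, of q n] by (simp add: W_def sum_distrib_left[symmetric])
    finally show "(\<Sum>w\<in>W n. \<kappa> ^ length w * wprod q w) = \<kappa> ^ n * (sum q I) ^ n" .
  qed
  also have "\<dots> \<le> (\<Sum>n\<in>{..M}. (\<kappa> * s) ^ n)"
    by (intro sum_mono) (simp add: power_mult_distrib[symmetric] power_mono mult_left_mono k s0 qs)
  also have "\<dots> = (\<Sum>n<Suc M. (\<kappa> * s) ^ n)" by (simp add: lessThan_Suc_atMost)
  also have "\<dots> \<le> (\<Sum>n. (\<kappa> * s) ^ n)"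
  proof (rule sum_le_suminf)
    have "0 \<le> \<kappa> * s" using k s0 qs by simp
    then show "summable (\<lambda>n. (\<kappa> * s) ^ n)" using ks by (intro summable_geometric) simp
  qed (use k s0 qs in simp_all)
  also have "\<dots> = 1 / (1 - \<kappa> * s)"
  proof -
    have "0 \<le> \<kappa> * s" using k s0 qs by simp
    then show ?thesis using ks by (subst suminf_geometric) auto
  qed
  finally show ?thesis .
qed




context ifs
begin

lemma main:
  fixes \<Delta> :: "('i \<Rightarrow> real) set" and \<mu> :: "('i \<Rightarrow> real) \<Rightarrow> 'a measure"
  assumes D: "\<Delta> \<subseteq> prob_vectors I" and M: "\<And>p. p \<in> \<Delta> \<Longrightarrow> is_self_similar_measure I S p (\<mu> p)"
  shows "uniform_densities K (\<mu> ` \<Delta>)"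
  unfolding uniform_densities_def
proof (rule conjI; (intro allI impI ballI)?)
  fix m assume "m \<in> \<mu> ` \<Delta>"
  then obtain p where p: "p \<in> \<Delta>" "m = \<mu> p" by auto
  interpret ifs_measure I S r K p "\<mu> p"
    by (rule ifs_measure.intro[OF ifs_axioms], unfold_locales) (use D M p in auto)
  show "prob_space m \<and> sets m = sets borel \<and> emeasure m (UNIV - K) = 0"
    using ps sets_mu support p by simp
next
  fix eps :: real assume eps: "eps > 0"
  show "\<exists>E :: 'a measure set. \<exists>eta>0. (\<forall>nu\<in>E. sets nu = sets borel) \<and>
        (SUP F\<in>{F. finite F \<and> F \<subseteq> E}. \<Sum>nu\<in>F. emeasure nu (space nu)) < \<infinity> \<and>
        (\<forall>mu\<in>\<mu> ` \<Delta>. \<forall>r. 0 < r \<and> r < eta \<longrightarrow> (\<forall>x\<in>K. \<exists>nu\<in>E.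
            ennreal (r powr eps) * emeasure mu (ball x r) \<le> emeasure nu (ball x r)))"
  proof -
    obtain \<delta> where \<delta>: "\<delta> > 0" "\<forall>i\<in>I. \<forall>j\<in>I. i \<noteq> j \<longrightarrow> (\<forall>a\<in>K. \<forall>b\<in>K. \<delta> \<le> dist (S i a) (S j b))"
      using sep_exists by blast
    define \<rho>m where "\<rho>m = Min (r ` I)"
    have \<rho>m: "0 < \<rho>m" "\<And>i. i \<in> I \<Longrightarrow> \<rho>m \<le> r i"
    proof -
      have "\<rho>m \<in> r ` I" unfolding \<rho>m_def using finI neI by (intro Min_in) auto
      then show "0 < \<rho>m" using r_pos by auto
      show "\<And>i. i \<in> I \<Longrightarrow> \<rho>m \<le> r i" unfolding \<rho>m_def using finI by auto
    qed
    obtain B where B: "B > 0" "\<forall>x\<in>K. norm x \<le> B"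
      using compact_imp_bounded[OF cK] unfolding bounded_pos by auto
    define Dm where "Dm = 2 * B"
    have Dm0: "Dm > 0" using B by (simp add: Dm_def)
    have Dm: "dist a b \<le> Dm" if "a \<in> K" "b \<in> K" for a b
    proof -
      have "dist a b \<le> norm a + norm b" unfolding dist_norm by (rule norm_triangle_ineq4)
      also have "\<dots> \<le> Dm"
      proof -
        have "norm a \<le> B" "norm b \<le> B" using B(2) that by auto
        then show ?thesis by (simp add: Dm_def)
      qed
      finally show ?thesis .
    qed
    obtain L where L: "\<rho> ^ L < \<delta> * \<rho>m / Dm"
      using real_arch_pow_inv[of "\<delta> * \<rho>m / Dm" \<rho>] rho \<delta>(1) \<rho>m(1) Dm0 by auto
    have LD: "\<rho> ^ L * Dm < \<delta> * \<rho>m" using L Dm0 by (simp add: less_divide_eq)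
    define \<kappa> where "\<kappa> = \<rho> powr eps"
    have \<kappa>0: "0 < \<kappa>" using rho by (simp add: \<kappa>_def)
    have \<kappa>1: "\<kappa> < 1"
    proof -
      have "\<rho> powr eps < 1 powr eps" using rho eps by (intro powr_less_mono2) auto
      then show ?thesis by (simp add: \<kappa>_def)
    qed
    obtain N :: nat where N: "real (card I) * \<kappa> / (1 - \<kappa>) < real N"
      using reals_Archimedean2 by blast
    have "0 \<le> real (card I) * \<kappa> / (1 - \<kappa>)" using \<kappa>0 \<kappa>1 by simp
    then have Npos: "0 < real N" using N by linarith
    define s where "s = 1 + real (card I) / real N"
    have ks: "\<kappa> * s < 1"
    proof -
      have "real (card I) * \<kappa> < real N * (1 - \<kappa>)" using N \<kappa>1 by (simp add: divide_less_eq mult.commute)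
      then have "\<kappa> * (real (card I) / real N) < 1 - \<kappa>" using Npos
        by (simp add: field_simps)
      then show ?thesis by (simp add: s_def algebra_simps)
    qed
    obtain x0 where x0: "x0 \<in> K" using neK by blast
    define G where "G = (\<lambda>k. real k / real N) ` {..N}"
    define Q where "Q = {q \<in> PiE I (\<lambda>_. G). sum q I \<le> s}"
    define V where "V = {v. set v \<subseteq> I \<and> length v = L}"
    define C where "C = \<delta> powr eps"
    define wt where "wt = (\<lambda>(q::'i\<Rightarrow>real, w::'i list, v::'i list). C * \<kappa> ^ length w * wprod q w)"
    define nuf where "nuf = (\<lambda>t. scale_measure (ennreal (wt t))
        (return borel (Sw S (fst (snd t) @ snd (snd t)) x0)))"
    define T where "T = Q \<times> {w. set w \<subseteq> I} \<times> V"
    have finG: "finite G" by (simp add: G_def)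
    have finQ: "finite Q" unfolding Q_def
      by (rule finite_subset[OF _ finite_PiE[OF finI, of "\<lambda>_. G"]]) (use finG in auto)
    have finV: "finite V" unfolding V_def using finI by (rule finite_lists_length_eq)
    have C0: "0 < C" using \<delta> by (simp add: C_def)
    have Qnn: "0 \<le> q i" if "q \<in> Q" "i \<in> I" for q i
      using that by (auto simp: Q_def G_def PiE_def Pi_def)
    have Qs: "sum q I \<le> s" if "q \<in> Q" for q using that by (simp add: Q_def)
    have wt_nn: "0 \<le> wt t" if tT: "t \<in> T" for t
    proof -
      obtain q w v where t: "t = (q, w, v)" "q \<in> Q" "set w \<subseteq> I"
        using tT unfolding T_def by auto
      have "0 \<le> wprod q w" by (rule wprod_nonneg) (use t Qnn in auto)
      then show ?thesis using C0 \<kappa>0 t by (simp add: wt_def)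
    qed
    have mass: "emeasure (nuf t) (space (nuf t)) = ennreal (wt t)" for t
      by (simp add: nuf_def space_scale_measure)
    define Bd where "Bd = real (card Q) * (real (card V) * (C * (1 / (1 - \<kappa> * s))))"
    have sum_bound: "(\<Sum>t\<in>T'. wt t) \<le> Bd" if T': "T' \<subseteq> T" "finite T'" for T'
    proof -
      define M where "M = Max (insert 0 ((\<lambda>t. length (fst (snd t))) ` T'))"
      define WM where "WM = {w. set w \<subseteq> I \<and> length w \<le> M}"
      have finWM: "finite WM" unfolding WM_def using finI by (rule finite_lists_length_le)
      have sub: "T' \<subseteq> Q \<times> WM \<times> V"
      proof
        fix t assume t: "t \<in> T'"
        then have "length (fst (snd t)) \<le> M" unfolding M_def using T'(2) by (intro Max_ge) auto
        then show "t \<in> Q \<times> WM \<times> V" using t T'(1) by (auto simp: T_def WM_def)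
      qed
      have "(\<Sum>t\<in>T'. wt t) \<le> (\<Sum>t\<in>Q \<times> WM \<times> V. wt t)"
        by (rule sum_mono2) (use finQ finWM finV sub wt_nn in \<open>auto simp: T_def WM_def\<close>)
      also have "\<dots> = (\<Sum>q\<in>Q. \<Sum>wv\<in>WM \<times> V. wt (q, wv))"
        unfolding sum.cartesian_product by simp
      also have "\<dots> = (\<Sum>q\<in>Q. \<Sum>w\<in>WM. \<Sum>v\<in>V. wt (q, w, v))"
        by (simp add: sum.cartesian_product)
      also have "\<dots> = (\<Sum>q\<in>Q. \<Sum>w\<in>WM. real (card V) * (C * (\<kappa> ^ length w * wprod q w)))"
        by (simp add: wt_def mult.assoc)
      also have "\<dots> = (\<Sum>q\<in>Q. real (card V) * (C * (\<Sum>w\<in>WM. \<kappa> ^ length w * wprod q w)))"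
        by (simp add: sum_distrib_left)
      also have "\<dots> \<le> (\<Sum>q\<in>Q. real (card V) * (C * (1 / (1 - \<kappa> * s))))"
      proof (intro sum_mono mult_left_mono)
        fix q assume q: "q \<in> Q"
        show "(\<Sum>w\<in>WM. \<kappa> ^ length w * wprod q w) \<le> 1 / (1 - \<kappa> * s)"
          unfolding WM_def by (rule geo_words[OF finI]) (use \<kappa>0 Qnn q Qs ks in auto)
      qed (use C0 in auto)
      also have "\<dots> = Bd" by (simp add: Bd_def)
      finally show ?thesis .
    qed
    show ?thesis
    proof (intro exI[of _ "nuf ` T"] exI[of _ \<delta>] conjI)
      show "\<delta> > 0" by (rule \<delta>(1))
      show "\<forall>nu\<in>nuf ` T. sets nu = sets borel" by (auto simp: nuf_def)
      have "(SUP F\<in>{F. finite F \<and> F \<subseteq> nuf ` T}. \<Sum>nu\<in>F. emeasure nu (space nu)) \<le> ennreal Bd"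
      proof (rule SUP_least)
        fix F assume "F \<in> {F. finite F \<and> F \<subseteq> nuf ` T}"
        then have F: "finite F" "F \<subseteq> nuf ` T" by auto
        then obtain T' where T': "T' \<subseteq> T" "finite T'" "F = nuf ` T'"
          by (meson finite_subset_image)
        have "(\<Sum>nu\<in>F. emeasure nu (space nu)) \<le> (\<Sum>t\<in>T'. emeasure (nuf t) (space (nuf t)))"
          unfolding T'(3) using sum_image_le[OF T'(2), of "\<lambda>nu. emeasure nu (space nu)" nuf]
          by (simp add: o_def)
        also have "\<dots> = (\<Sum>t\<in>T'. ennreal (wt t))" by (simp add: mass)
        also have "\<dots> = ennreal (\<Sum>t\<in>T'. wt t)"
          using wt_nn T'(1) by (intro sum_ennreal) auto
        also have "\<dots> \<le> ennreal Bd" using sum_bound[OF T'(1,2)] by (rule ennreal_leI)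
        finally show "(\<Sum>nu\<in>F. emeasure nu (space nu)) \<le> ennreal Bd" .
      qed
      also have "\<dots> < \<infinity>" by simp
      finally show "(SUP F\<in>{F. finite F \<and> F \<subseteq> nuf ` T}. \<Sum>nu\<in>F. emeasure nu (space nu)) < \<infinity>" .
      show "\<forall>mu\<in>\<mu> ` \<Delta>. \<forall>r0. 0 < r0 \<and> r0 < \<delta> \<longrightarrow> (\<forall>x\<in>K. \<exists>nu\<in>nuf ` T.
            ennreal (r0 powr eps) * emeasure mu (ball x r0) \<le> emeasure nu (ball x r0))"
      proof (intro ballI allI impI)
        fix m r0 x assume m: "m \<in> \<mu> ` \<Delta>" and r0: "0 < r0 \<and> r0 < \<delta>" and x: "x \<in> K"
        obtain p where p: "p \<in> \<Delta>" "m = \<mu> p" using m by auto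
        interpret pm: ifs_measure I S r K p "\<mu> p"
          by (rule ifs_measure.intro[OF ifs_axioms], unfold_locales) (use D M p in auto)
        define P where "P w \<longleftrightarrow> set w \<subseteq> I \<and> x \<in> KW w \<and> r0 < \<delta> * wprod r w" for w
        have P0: "P []" using x r0 by (simp add: P_def KW_def)
        obtain b where b: "\<rho> ^ b < r0 / \<delta>" using real_arch_pow_inv[of "r0 / \<delta>" \<rho>] r0 \<delta>(1) rho by auto
        have Pb: "\<forall>w. P w \<longrightarrow> length w < b"
        proof (intro allI impI)
          fix w assume Pw: "P w"
          have "wprod r w \<le> \<rho> ^ length w"
            by (rule wprod_le_pow) (use Pw r_pos rho(3) in \<open>force simp: P_def intro: less_imp_le\<close>)
          show "length w < b"
          proof (rule ccontr)
            assume "\<not> length w < b"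
            then have "\<rho> ^ length w \<le> \<rho> ^ b" using rho by (intro power_decreasing) auto
            then have "wprod r w < r0 / \<delta>" using b \<open>wprod r w \<le> \<rho> ^ length w\<close> by linarith
            then have "\<delta> * wprod r w < r0" using \<delta>(1) by (simp add: less_divide_eq mult.commute)
            then show False using Pw by (simp add: P_def)
          qed
        qed
        obtain w where w: "P w" and wmax: "\<And>w'. P w' \<Longrightarrow> length w' \<le> length w"
          using ex_has_greatest_nat[of P "[]" length b, OF P0 Pb] by blast
        have wI: "set w \<subseteq> I" and xw: "x \<in> KW w" and rw: "r0 < \<delta> * wprod r w"
          using w by (auto simp: P_def)
        obtain i where i: "i \<in> I" "x \<in> KW (w @ [i])" using KW_split[OF wI xw] by blast
        have "\<not> P (w @ [i])" using wmax[of "w @ [i]"] by auto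
        then have "\<delta> * (wprod r w * r i) \<le> r0" using i wI by (auto simp: P_def wprod_append)
        moreover have "\<delta> * (wprod r w * \<rho>m) \<le> \<delta> * (wprod r w * r i)"
          using \<rho>m(2)[OF i(1)] r_wprod_pos[OF wI] \<delta>(1) by (intro mult_left_mono) auto
        ultimately have r0low: "\<delta> * wprod r w * \<rho>m \<le> r0" by (simp add: mult.assoc)
        obtain v where v: "set v \<subseteq> I" "length v = L" "x \<in> KW (w @ v)"
          using KW_extend[OF wI xw] by blast
        define y0 where "y0 = Sw S (w @ v) x0"
        have y0: "y0 \<in> ball x r0"
        proof -
          obtain a where a: "a \<in> K" "x = Sw S (w @ v) a" using v(3) by (auto simp: KW_def)
          have wvI: "set (w @ v) \<subseteq> I" using wI v by auto
          have "dist x y0 = wprod r (w @ v) * dist a x0" using Sw_dist[OF wvI] a by (simp add: y0_def)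
          also have "\<dots> = wprod r w * (wprod r v * dist a x0)" by (simp add: wprod_append mult.assoc)
          also have "\<dots> \<le> wprod r w * (\<rho> ^ L * Dm)"
          proof (intro mult_left_mono mult_mono)
            show "wprod r v \<le> \<rho> ^ L"
              using wprod_le_pow[of v r \<rho>] v r_pos rho(3) by (force intro: less_imp_le)
            show "dist a x0 \<le> Dm" using Dm a(1) x0 by blast
          qed (use r_wprod_pos[OF wI] rho in auto)
          also have "\<dots> < wprod r w * (\<delta> * \<rho>m)"
            using LD r_wprod_pos[OF wI] by (intro mult_strict_left_mono) auto
          also have "\<dots> \<le> r0" using r0low by (simp add: mult.assoc mult.left_commute)
          finally show ?thesis by (simp add: dist_commute)
        qed
        define q where "q = restrict (\<lambda>i. real (nat \<lceil>p i * real N\<rceil>) / real N) I"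
        have pI: "p \<in> prob_vectors I" using D p by auto
        have p01: "0 \<le> p i \<and> p i \<le> 1" if "i \<in> I" for i
        proof -
          have nn: "\<forall>j\<in>I. 0 \<le> p j" and s1: "sum p I = 1" using pI by (auto simp: prob_vectors_def)
          have "p i \<le> sum p I" using nn that finI by (intro member_le_sum) auto
          then show ?thesis using nn that s1 by auto
        qed
        have q_ge: "p i \<le> q i" and q_le: "q i \<le> p i + 1 / real N" and q_G: "q i \<in> G"
          if "i \<in> I" for i
        proof -
          let ?y = "p i * real N"
          have pn: "0 \<le> ?y" using p01[OF that] by simp
          have yN: "?y \<le> real N" using p01[OF that] Npos by (simp add: mult_le_cancel_right1)
          have cnn: "0 \<le> \<lceil>?y\<rceil>" using pn by (simp add: ceiling_le_zero)
          have eq: "real (nat \<lceil>?y\<rceil>) = of_int \<lceil>?y\<rceil>" using cnn by simp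
          have c1: "?y \<le> of_int \<lceil>?y\<rceil>" by (rule le_of_int_ceiling)
          have c2: "of_int \<lceil>?y\<rceil> \<le> ?y + 1" by (rule of_int_ceiling_le_add_one)
          have c3: "nat \<lceil>?y\<rceil> \<le> N" using yN by (simp add: ceiling_le_iff nat_le_iff)
          have qi: "q i = real (nat \<lceil>?y\<rceil>) / real N" using that by (simp add: q_def)
          show "p i \<le> q i" unfolding qi eq using c1 Npos by (simp add: le_divide_eq)
          show "q i \<le> p i + 1 / real N" unfolding qi eq using c2 Npos
            by (simp add: divide_le_eq distrib_right)
          show "q i \<in> G" unfolding qi G_def using c3 by auto
        qed
        have qQ: "q \<in> Q"
        proof -
          have "q \<in> PiE I (\<lambda>_. G)" unfolding q_def using q_G by (auto simp: q_def restrict_PiE_iff)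
          moreover have "sum q I \<le> s"
          proof -
            have "sum q I \<le> (\<Sum>i\<in>I. p i + 1 / real N)" by (rule sum_mono) (rule q_le)
            also have "\<dots> = 1 + real (card I) / real N"
              using pI by (simp add: sum.distrib prob_vectors_def)
            finally show ?thesis by (simp add: s_def)
          qed
          ultimately show ?thesis by (simp add: Q_def)
        qed
        have tT: "(q, w, v) \<in> T" using qQ wI v by (simp add: T_def V_def)
        have pq: "wprod p w \<le> wprod q w"
          by (rule wprod_mono) (use wI p01 q_ge in auto)
        have pw0: "0 \<le> wprod p w" by (rule wprod_nonneg) (use wI p01 in auto)
        have rpow: "r0 powr eps \<le> C * \<kappa> ^ length w"
        proof -
          have "wprod r w \<le> \<rho> ^ length w"
            by (rule wprod_le_pow) (use wI r_pos rho(3) in \<open>force intro: less_imp_le\<close>)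
          then have "r0 \<le> \<delta> * \<rho> ^ length w" using rw \<delta>(1)
            by (smt (verit) mult_left_mono)
          then have "r0 powr eps \<le> (\<delta> * \<rho> ^ length w) powr eps"
            using r0 eps by (intro powr_mono2) auto
          also have "\<dots> = \<delta> powr eps * (\<rho> ^ length w) powr eps"
            using \<delta>(1) rho by (simp add: powr_mult)
          also have "(\<rho> ^ length w) powr eps = \<kappa> ^ length w"
          proof -
            have "(\<rho> ^ length w) powr eps = (\<rho> powr real (length w)) powr eps"
              using rho by (simp add: powr_realpow)
            also have "\<dots> = \<rho> powr (real (length w) * eps)" by (simp add: powr_powr)
            also have "\<dots> = \<kappa> ^ length w" using rho unfolding \<kappa>_def by (simp add: powr_power)
            finally show ?thesis .
          qed
          finally show ?thesis by (simp add: C_def)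
        qed
        have "ennreal (r0 powr eps) * emeasure m (ball x r0) \<le> ennreal (r0 powr eps) * ennreal (wprod p w)"
          using p(2) pm.ball_bound[OF \<delta> wI xw] rw by (intro mult_left_mono) auto
        also have "\<dots> = ennreal (r0 powr eps * wprod p w)" using pw0 by (simp add: ennreal_mult)
        also have "\<dots> \<le> ennreal (wt (q, w, v))"
          unfolding wt_def using rpow pq pw0 C0 \<kappa>0
          by (intro ennreal_leI) (simp add: mult_mono)
        also have "\<dots> = emeasure (nuf (q, w, v)) (ball x r0)"
          using y0 by (simp add: nuf_def y0_def)
        finally show "\<exists>nu\<in>nuf ` T. ennreal (r0 powr eps) * emeasure m (ball x r0) \<le> emeasure nu (ball x r0)"
          using tT by blast
      qed

    qed
  qed

qed

end

theorem propositionp: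
  fixes I :: "'i set" and S :: "'i \<Rightarrow> 'a::euclidean_space \<Rightarrow> 'a" and r :: "'i \<Rightarrow> real"
    and K :: "'a set" and \<Delta> :: "('i \<Rightarrow> real) set" and \<mu> :: "('i \<Rightarrow> real) \<Rightarrow> 'a measure"
  assumes "finite I" and "I \<noteq> {}"
    and "\<And>i. i \<in> I \<Longrightarrow> contracting_similarity (S i) (r i)"
    and "compact K" and "K \<noteq> {}" and "K = (\<Union>i\<in>I. S i ` K)"
    and "\<And>i j. i \<in> I \<Longrightarrow> j \<in> I \<Longrightarrow> i \<noteq> j \<Longrightarrow> S i ` K \<inter> S j ` K = {}"
    and "\<Delta> \<subseteq> prob_vectors I"
    and "\<And>p. p \<in> \<Delta> \<Longrightarrow> is_self_similar_measure I S p (\<mu> p)"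
  shows "uniform_densities K (\<mu> ` \<Delta>)"
proof -
  have ifs: "ifs I S r K" unfolding ifs_def using assms by blast
  show ?thesis by (rule ifs.main[OF ifs assms(8)]) (rule assms(9))
qed

end
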